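(* Let $(G,u,v,\alpha,\beta)$ be a Guvab, and suppose it is not the case that ($G$ is bipartite, $\alpha=0$, and $\beta=1$). Then $W:=\lim_{k\to\infty}W(\mu_k,\nu_k)$ exists, and furthermore: (a) $W=0$ if one of the following holds: $0<\alpha\le\beta<1$; or $\alpha=\beta=1$ and $u=v$; or $G$ is not bipartite and $0=\alpha\le\beta<1$; or $\alpha=\beta=0$ and there is a walk from $u$ to $v$ with an even number of steps; (b) $W=1$ if $\alpha=\beta=0$ and $W\ne0$; (c) $W=\frac12$ if $0=\alpha<\beta<1$ and $G$ is bipartite.
   Context: A Guvab is a tuple $(G,u,v,\alpha,\beta)$ where $G$ is a finite, connected, simple graph, $u,v\in V(G)$, and $\alpha,\beta\in[0,1]$ with $\alpha\le\beta$. A random walk on $G$ with starting vertex $w$ and laziness $\gamma$ is the Markov chain $R_0=w$ and, for $i\ge1$, $R_i=R_{i-1}$ with probability $\gamma$ and $R_i=t$ with probability $\frac{1-\gamma}{\deg(R_{i-1})}$ for each neighbor $t$ of $R_{i-1}$. $\mu_k$ is the distribution after $k$ steps of the walk from $u$ with laziness $\alpha$, and $\nu_k$ that of the walk from $v$ with laziness $\beta$. $W(\mu,\nu)$ is the Wasserstein ($L^1$ optimal transport) distance with respect to the graph distance: the minimum over transportation plans (nonnegative $T$ on $V(G)\times V(G)$ with marginals $\mu,\nu$) of $\sum d(w_1,w_2)T(w_1,w_2)$. *)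

theory Defs
  imports Complex_Main
begin

definition simple_graph :: "'a set \<Rightarrow> ('a \<Rightarrow> 'a \<Rightarrow> bool) \<Rightarrow> bool" where
  "simple_graph V E \<longleftrightarrow> finite V \<and> (\<forall>x y. E x y \<longrightarrow> x \<in> V \<and> y \<in> V)
     \<and> (\<forall>x y. E x y \<longrightarrow> E y x) \<and> (\<forall>x. \<not> E x x)"

definition connected_graph :: "'a set \<Rightarrow> ('a \<Rightarrow> 'a \<Rightarrow> bool) \<Rightarrow> bool" where
  "connected_graph V E \<longleftrightarrow> V \<noteq> {} \<and> (\<forall>x\<in>V. \<forall>y\<in>V. \<exists>n. (E ^^ n) x y)"

definition bipartite :: "'a set \<Rightarrow> ('a \<Rightarrow> 'a \<Rightarrow> bool) \<Rightarrow> bool" where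
  "bipartite V E \<longleftrightarrow> (\<exists>A. A \<subseteq> V \<and> (\<forall>x y. E x y \<longrightarrow> (x \<in> A \<longleftrightarrow> y \<notin> A)))"

definition graph_dist :: "('a \<Rightarrow> 'a \<Rightarrow> bool) \<Rightarrow> 'a \<Rightarrow> 'a \<Rightarrow> nat" where
  "graph_dist E x y = (LEAST n. (E ^^ n) x y)"

definition degree :: "'a set \<Rightarrow> ('a \<Rightarrow> 'a \<Rightarrow> bool) \<Rightarrow> 'a \<Rightarrow> nat" where
  "degree V E x = card {t \<in> V. E x t}"

definition trans_prob :: "'a set \<Rightarrow> ('a \<Rightarrow> 'a \<Rightarrow> bool) \<Rightarrow> real \<Rightarrow> 'a \<Rightarrow> 'a \<Rightarrow> real" where
  "trans_prob V E \<gamma> x y =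
     (if x = y then \<gamma> else 0) + (if E x y then (1 - \<gamma>) / real (degree V E x) else 0)"

primrec walk_dist :: "'a set \<Rightarrow> ('a \<Rightarrow> 'a \<Rightarrow> bool) \<Rightarrow> real \<Rightarrow> 'a \<Rightarrow> nat \<Rightarrow> 'a \<Rightarrow> real" where
  "walk_dist V E \<gamma> w 0 = (\<lambda>y. if y = w then 1 else 0)"
| "walk_dist V E \<gamma> w (Suc k) =
     (\<lambda>y. \<Sum>x\<in>V. walk_dist V E \<gamma> w k x * trans_prob V E \<gamma> x y)"

definition transport_plan :: "'a set \<Rightarrow> ('a \<Rightarrow> real) \<Rightarrow> ('a \<Rightarrow> real) \<Rightarrow> ('a \<Rightarrow> 'a \<Rightarrow> real) \<Rightarrow> bool" where
  "transport_plan V \<mu> \<nu> T \<longleftrightarrow>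
     (\<forall>x\<in>V. \<forall>y\<in>V. T x y \<ge> 0)
   \<and> (\<forall>x\<in>V. (\<Sum>y\<in>V. T x y) = \<mu> x)
   \<and> (\<forall>y\<in>V. (\<Sum>x\<in>V. T x y) = \<nu> y)"

definition wasserstein :: "'a set \<Rightarrow> ('a \<Rightarrow> 'a \<Rightarrow> bool) \<Rightarrow> ('a \<Rightarrow> real) \<Rightarrow> ('a \<Rightarrow> real) \<Rightarrow> real" where
  "wasserstein V E \<mu> \<nu> =
     Inf {(\<Sum>x\<in>V. \<Sum>y\<in>V. real (graph_dist E x y) * T x y) | T. transport_plan V \<mu> \<nu> T}"

end

theory Submission
  imports Defs
begin


locale G =
  fixes V :: "'a set" and E :: "'a \<Rightarrow> 'a \<Rightarrow> bool"
  assumes graph: "simple_graph V E" and conn: "connected_graph V E" and nontriv: "card V \<ge> 2"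
begin

lemma finV: "finite V" using graph by (simp add: simple_graph_def)
lemma EV: "E x y \<Longrightarrow> x \<in> V \<and> y \<in> V" using graph by (simp add: simple_graph_def)
lemma Esym: "E x y \<Longrightarrow> E y x" using graph by (simp add: simple_graph_def)
lemma Eirr: "\<not> E x x" using graph by (simp add: simple_graph_def)

lemma walkV: "(E ^^ n) x y \<Longrightarrow> x \<in> V \<Longrightarrow> y \<in> V"
proof (induction n arbitrary: y)
  case 0 then show ?case by auto
next
  case (Suc n)
  then obtain z where "(E ^^ n) x z" "E z y" by (meson relpowp_Suc_E)
  then show ?case using EV by blast
qed

lemma conn_walk: "x \<in> V \<Longrightarrow> y \<in> V \<Longrightarrow> \<exists>n. (E ^^ n) x y"
  using conn by (auto simp: connected_graph_def)

lemma other: "x \<in> V \<Longrightarrow> \<exists>y\<in>V. y \<noteq> x"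
proof (rule ccontr)
  assume "x \<in> V" "\<not> (\<exists>y\<in>V. y \<noteq> x)"
  then have "V \<subseteq> {x}" by blast
  then have "card V \<le> 1" using card_mono[of "{x}" V] by simp
  then show False using nontriv by simp
qed

lemma has_nb: "x \<in> V \<Longrightarrow> \<exists>z. E x z"
proof -
  assume x: "x \<in> V"
  obtain y where y: "y \<in> V" "y \<noteq> x" using other[OF x] by auto
  obtain n where n: "(E ^^ n) x y" using conn_walk[OF x y(1)] by auto
  show ?thesis
  proof (cases n)
    case 0 then show ?thesis using n y by auto
  next
    case (Suc m) then show ?thesis using n relpowp_Suc_D2[of m E x y] by auto
  qed
qed

lemma deg_pos: "x \<in> V \<Longrightarrow> degree V E x > 0"
proof -
  assume x: "x \<in> V"
  obtain z where "E x z" using has_nb[OF x] by auto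
  then have "z \<in> {t \<in> V. E x t}" using EV by auto
  then show ?thesis unfolding degree_def using finV
    by (metis (no_types, lifting) card_gt_0_iff empty_iff finite_subset mem_Collect_eq subsetI)
qed

lemma pad2: "(E ^^ n) x y \<Longrightarrow> y \<in> V \<Longrightarrow> (E ^^ (n + 2 * j)) x y"
proof (induction j)
  case 0 then show ?case by simp
next
  case (Suc j)
  then have w: "(E ^^ (n + 2 * j)) x y" by simp
  show ?case
  proof (cases "n + 2 * j")
    case 0
    then have "x = y" using w by simp
    obtain z where "E y z" using has_nb Suc.prems(2) by auto
    then have "(E ^^ 2) y y" using Esym
      by (metis One_nat_def Suc_1 relpowp_1 relpowp_Suc_I)
    have eq: "n + 2 * Suc j = 2" using 0 by simp
    show ?thesis unfolding eq using \<open>(E ^^ 2) y y\<close> \<open>x = y\<close> by simp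
  next
    case (Suc m)
    then obtain z where "E z y" using w by (auto elim: relpowp_Suc_E)
    then have "E y z" by (rule Esym)
    then have "(E ^^ Suc (n + 2 * j)) x z" using w by (rule relpowp_Suc_I[rotated])
    then have "(E ^^ Suc (Suc (n + 2 * j))) x y" using \<open>E z y\<close> by (rule relpowp_Suc_I)
    then show ?thesis by simp
  qed
qed


abbreviation P where "P \<gamma> x y \<equiv> trans_prob V E \<gamma> x y"

definition step :: "real \<Rightarrow> ('a \<Rightarrow> real) \<Rightarrow> 'a \<Rightarrow> real" where
  "step \<gamma> \<mu> = (\<lambda>y. \<Sum>x\<in>V. \<mu> x * P \<gamma> x y)"

lemma wd_Suc: "walk_dist V E \<gamma> w (Suc k) = step \<gamma> (walk_dist V E \<gamma> w k)"
  by (simp add: step_def)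

lemma P_nonneg: "0 \<le> \<gamma> \<Longrightarrow> \<gamma> \<le> 1 \<Longrightarrow> P \<gamma> x y \<ge> 0"
  by (simp add: trans_prob_def)

lemma card_nb: "real (card {y \<in> V. E x y}) = real (degree V E x)"
  by (simp add: degree_def)

lemma P_rowsum: "x \<in> V \<Longrightarrow> (\<Sum>y\<in>V. P \<gamma> x y) = 1"
proof -
  assume x: "x \<in> V"
  have d: "real (degree V E x) > 0" using deg_pos[OF x] by simp
  have "(\<Sum>y\<in>V. P \<gamma> x y) = (\<Sum>y\<in>V. (if x = y then \<gamma> else 0)) + (\<Sum>y\<in>V. (if E x y then (1 - \<gamma>) / real (degree V E x) else 0))"
    unfolding trans_prob_def by (rule sum.distrib)
  also have "(\<Sum>y\<in>V. (if x = y then \<gamma> else 0)) = \<gamma>" using x finV by simp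
  also have "(\<Sum>y\<in>V. (if E x y then (1 - \<gamma>) / real (degree V E x) else 0)) = real (card {y \<in> V. E x y}) * ((1 - \<gamma>) / real (degree V E x))"
    using finV by (simp add: sum.If_cases Int_def)
  also have "\<dots> = 1 - \<gamma>" using d by (simp add: degree_def)
  finally show ?thesis by simp
qed

lemma step_mass: "(\<Sum>y\<in>V. step \<gamma> \<mu> y) = (\<Sum>x\<in>V. \<mu> x)"
proof -
  have "(\<Sum>y\<in>V. step \<gamma> \<mu> y) = (\<Sum>x\<in>V. \<Sum>y\<in>V. \<mu> x * P \<gamma> x y)"
    unfolding step_def by (rule sum.swap)
  also have "\<dots> = (\<Sum>x\<in>V. \<mu> x * (\<Sum>y\<in>V. P \<gamma> x y))" by (simp add: sum_distrib_left)
  also have "\<dots> = (\<Sum>x\<in>V. \<mu> x)" by (simp add: P_rowsum)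
  finally show ?thesis .
qed

lemma step_nonneg: "0 \<le> \<gamma> \<Longrightarrow> \<gamma> \<le> 1 \<Longrightarrow> (\<And>x. x \<in> V \<Longrightarrow> \<mu> x \<ge> 0) \<Longrightarrow> step \<gamma> \<mu> y \<ge> 0"
  unfolding step_def by (auto intro!: sum_nonneg mult_nonneg_nonneg P_nonneg)

lemma wd_nonneg: "0 \<le> \<gamma> \<Longrightarrow> \<gamma> \<le> 1 \<Longrightarrow> walk_dist V E \<gamma> w k y \<ge> 0"
proof (induction k arbitrary: y)
  case 0 then show ?case by simp
next
  case (Suc k) then show ?case unfolding wd_Suc by (intro step_nonneg) auto
qed

lemma wd_mass: "w \<in> V \<Longrightarrow> (\<Sum>y\<in>V. walk_dist V E \<gamma> w k y) = 1"
proof (induction k)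
  case 0 then show ?case using finV by simp
next
  case (Suc k) then show ?case unfolding wd_Suc step_mass by simp
qed

lemma wd_out: "w \<in> V \<Longrightarrow> y \<notin> V \<Longrightarrow> walk_dist V E \<gamma> w k y = 0"
proof (induction k)
  case 0 then show ?case by auto
next
  case (Suc k)
  have "\<And>x. x \<in> V \<Longrightarrow> P \<gamma> x y = 0" using Suc.prems EV by (auto simp: trans_prob_def)
  then show ?case by (simp add: wd_Suc step_def)
qed

lemma step_cong: "(\<And>x. x \<in> V \<Longrightarrow> \<mu> x = \<nu> x) \<Longrightarrow> step \<gamma> \<mu> y = step \<gamma> \<nu> y"
  unfolding step_def by (rule sum.cong) auto

lemma step_diff: "step \<gamma> (\<lambda>x. \<mu> x - \<nu> x) y = step \<gamma> \<mu> y - step \<gamma> \<nu> y"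
  unfolding step_def by (simp add: left_diff_distrib sum_subtractf)

lemma iter_lin: "y \<in> V \<Longrightarrow> (step \<gamma> ^^ m) \<mu> y = (\<Sum>x\<in>V. \<mu> x * walk_dist V E \<gamma> x m y)"
proof (induction m arbitrary: y)
  case 0 then show ?case using finV by (simp add: if_distrib cong: if_cong)
next
  case (Suc m)
  have "(step \<gamma> ^^ Suc m) \<mu> y = (\<Sum>z\<in>V. (\<Sum>x\<in>V. \<mu> x * walk_dist V E \<gamma> x m z) * P \<gamma> z y)"
    by (simp add: step_def Suc.IH)
  also have "\<dots> = (\<Sum>x\<in>V. \<mu> x * (\<Sum>z\<in>V. walk_dist V E \<gamma> x m z * P \<gamma> z y))"
    unfolding sum_distrib_left sum_distrib_right mult.assoc by (rule sum.swap)
  also have "\<dots> = (\<Sum>x\<in>V. \<mu> x * walk_dist V E \<gamma> x (Suc m) y)" by simp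
  finally show ?case .
qed

lemma seq_iter: "(\<And>k y. y \<in> V \<Longrightarrow> f (Suc k) y = step \<gamma> (f k) y) \<Longrightarrow> y \<in> V \<Longrightarrow> f (k + m) y = (step \<gamma> ^^ m) (f k) y"
proof (induction m arbitrary: y)
  case 0 then show ?case by simp
next
  case (Suc m)
  have "f (k + Suc m) y = step \<gamma> (f (k + m)) y" using Suc.prems by simp
  also have "\<dots> = step \<gamma> ((step \<gamma> ^^ m) (f k)) y" by (rule step_cong) (simp add: Suc.IH Suc.prems)
  finally show ?case by simp
qed

lemma seq_kernel: "(\<And>k y. y \<in> V \<Longrightarrow> f (Suc k) y = step \<gamma> (f k) y) \<Longrightarrow> y \<in> V \<Longrightarrow>
   f (k + m) y = (\<Sum>x\<in>V. f k x * walk_dist V E \<gamma> x m y)"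
  using seq_iter iter_lin by metis

end


lemma doeblin:
  fixes d \<rho> :: "'a \<Rightarrow> real" and K :: "'a \<Rightarrow> 'a \<Rightarrow> real"
  assumes fin: "finite V" and CV: "C \<subseteq> V"
    and Krow: "\<And>x. x \<in> V \<Longrightarrow> (\<Sum>y\<in>V. K x y) = 1"
    and minor: "\<And>x y. x \<in> C \<Longrightarrow> y \<in> V \<Longrightarrow> K x y \<ge> \<rho> y"
    and supp: "\<And>x. x \<in> V - C \<Longrightarrow> d x = 0"
    and mass: "(\<Sum>x\<in>V. d x) = 0"
  shows "(\<Sum>y\<in>V. \<bar>\<Sum>x\<in>V. d x * K x y\<bar>) \<le> (1 - (\<Sum>y\<in>V. \<rho> y)) * (\<Sum>x\<in>V. \<bar>d x\<bar>)"
proof -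
  have eq: "(\<Sum>x\<in>V. d x * K x y) = (\<Sum>x\<in>V. d x * (K x y - \<rho> y))" for y
  proof -
    have "(\<Sum>x\<in>V. d x * (K x y - \<rho> y)) = (\<Sum>x\<in>V. d x * K x y) - (\<Sum>x\<in>V. d x) * \<rho> y"
      by (simp add: right_diff_distrib sum_subtractf sum_distrib_right)
    then show ?thesis using mass by simp
  qed
  have ab: "\<bar>d x * (K x y - \<rho> y)\<bar> = \<bar>d x\<bar> * (K x y - \<rho> y)" if "x \<in> V" "y \<in> V" for x y
  proof (cases "x \<in> C")
    case True then show ?thesis using minor[OF True that(2)] by (simp add: abs_mult)
  next
    case False then show ?thesis using supp that by simp
  qed
  have "(\<Sum>y\<in>V. \<bar>\<Sum>x\<in>V. d x * K x y\<bar>) \<le> (\<Sum>y\<in>V. \<Sum>x\<in>V. \<bar>d x * (K x y - \<rho> y)\<bar>)"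
    unfolding eq by (intro sum_mono sum_abs)
  also have "\<dots> = (\<Sum>y\<in>V. \<Sum>x\<in>V. \<bar>d x\<bar> * (K x y - \<rho> y))"
    by (intro sum.cong refl) (simp add: ab)
  also have "\<dots> = (\<Sum>x\<in>V. \<bar>d x\<bar> * ((\<Sum>y\<in>V. K x y) - (\<Sum>y\<in>V. \<rho> y)))"
    by (subst sum.swap) (simp add: sum_distrib_left right_diff_distrib sum_subtractf)
  also have "\<dots> = (1 - (\<Sum>y\<in>V. \<rho> y)) * (\<Sum>x\<in>V. \<bar>d x\<bar>)"
    by (simp add: Krow sum_distrib_left mult.commute)
  finally show ?thesis .
qed

lemma conv_abstract:
  fixes d :: "nat \<Rightarrow> 'a \<Rightarrow> real" and \<rho> :: "'a \<Rightarrow> real" and K Q :: "'a \<Rightarrow> 'a \<Rightarrow> real"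
  assumes fin: "finite V" and CV: "C \<subseteq> V" and Cne: "C \<noteq> {}"
    and Qrow: "\<And>x. x \<in> V \<Longrightarrow> (\<Sum>y\<in>V. Q x y) = 1"
    and Qnn: "\<And>x y. x \<in> V \<Longrightarrow> y \<in> V \<Longrightarrow> Q x y \<ge> 0"
    and Krow: "\<And>x. x \<in> V \<Longrightarrow> (\<Sum>y\<in>V. K x y) = 1"
    and minor: "\<And>x y. x \<in> C \<Longrightarrow> y \<in> V \<Longrightarrow> K x y \<ge> \<rho> y"
    and rpos: "(\<Sum>y\<in>V. \<rho> y) > 0"
    and step1: "\<And>k y. y \<in> V \<Longrightarrow> d (Suc k) y = (\<Sum>x\<in>V. d k x * Q x y)"
    and stepm: "\<And>k y. y \<in> V \<Longrightarrow> d (k + m) y = (\<Sum>x\<in>V. d k x * K x y)"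
    and mass: "\<And>k. (\<Sum>x\<in>V. d k x) = 0"
    and supp: "\<And>j x. x \<in> V - C \<Longrightarrow> d (j * m) x = 0"
  shows "(\<lambda>k. \<Sum>x\<in>V. \<bar>d k x\<bar>) \<longlonglongrightarrow> 0"
proof -
  define e where "e k = (\<Sum>x\<in>V. \<bar>d k x\<bar>)" for k
  define c where "c = 1 - (\<Sum>y\<in>V. \<rho> y)"
  have e0: "e k \<ge> 0" for k unfolding e_def by (simp add: sum_nonneg)
  have dec1: "e (Suc k) \<le> e k" for k
  proof -
    have "e (Suc k) = (\<Sum>y\<in>V. \<bar>\<Sum>x\<in>V. d k x * Q x y\<bar>)" unfolding e_def
      by (intro sum.cong refl) (simp add: step1)
    also have "\<dots> \<le> (1 - (\<Sum>y\<in>V. (\<lambda>_. 0::real) y)) * (\<Sum>x\<in>V. \<bar>d k x\<bar>)"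
      by (rule doeblin[OF fin order_refl Qrow]) (auto simp: Qnn mass)
    finally show ?thesis by (simp add: e_def)
  qed
  have dec: "e k \<le> e k'" if "k' \<le> k" for k k'
  proof -
    have "e (k' + i) \<le> e k'" for i
      by (induction i) (auto intro: order_trans[OF dec1])
    from this[of "k - k'"] that show ?thesis by simp
  qed
  obtain x0 where x0: "x0 \<in> C" using Cne by auto
  have "(\<Sum>y\<in>V. \<rho> y) \<le> (\<Sum>y\<in>V. K x0 y)" by (rule sum_mono) (use minor x0 in auto)
  then have c0: "c \<ge> 0" using Krow x0 CV unfolding c_def by auto
  have c1: "c < 1" using rpos unfolding c_def by simp
  have contr: "e ((Suc j) * m) \<le> c * e (j * m)" for j
  proof -
    have "e ((Suc j) * m) = (\<Sum>y\<in>V. \<bar>\<Sum>x\<in>V. d (j * m) x * K x y\<bar>)" unfolding e_def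
      by (intro sum.cong refl) (simp add: stepm[symmetric] add.commute)
    also have "\<dots> \<le> c * e (j * m)" unfolding c_def e_def
      by (rule doeblin[OF fin CV Krow]) (auto simp: minor supp mass)
    finally show ?thesis .
  qed
  have geo: "e (j * m) \<le> c ^ j * e 0" for j
  proof (induction j)
    case 0 then show ?case by simp
  next
    case (Suc j)
    have "e (Suc j * m) \<le> c * e (j * m)" by (rule contr)
    also have "\<dots> \<le> c * (c ^ j * e 0)" using Suc.IH c0 by (rule mult_left_mono)
    finally show ?case by simp
  qed
  have lim: "(\<lambda>j. c ^ j * e 0) \<longlonglongrightarrow> 0"
    by (rule tendsto_mult_left_zero) (rule LIMSEQ_power_zero, use c0 c1 in simp)
  show ?thesis unfolding e_def[symmetric]
  proof (rule LIMSEQ_I)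
    fix r :: real assume r: "r > 0"
    have "eventually (\<lambda>j. c ^ j * e 0 < r) sequentially" using order_tendstoD(2)[OF lim r] .
    then obtain j where j: "c ^ j * e 0 < r" by (auto simp: eventually_sequentially)
    show "\<exists>no. \<forall>n\<ge>no. norm (e n - 0) < r"
    proof (intro exI allI impI)
      fix n assume "n \<ge> j * m"
      then have "e n \<le> e (j * m)" by (rule dec)
      also have "\<dots> \<le> c ^ j * e 0" by (rule geo)
      finally show "norm (e n - 0) < r" using j e0[of n] by simp
    qed
  qed
qed



lemma finite_bound:
  assumes "finite S" "\<And>s. s \<in> S \<Longrightarrow> \<exists>n::nat. Q s n"
  shows "\<exists>N. \<forall>s\<in>S. \<exists>n\<le>N. Q s n"
proof -
  define N where "N = Max ((\<lambda>s. LEAST n. Q s n) ` S)"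
  have "\<forall>s\<in>S. \<exists>n\<le>N. Q s n"
  proof
    fix s assume s: "s \<in> S"
    have "Q s (LEAST n. Q s n)" using assms(2)[OF s] by (rule LeastI_ex)
    moreover have "(LEAST n. Q s n) \<le> N" unfolding N_def using assms(1) s by simp
    ultimately show "\<exists>n\<le>N. Q s n" by blast
  qed
  then show ?thesis by blast
qed

context G begin

lemma deg_le: "degree V E x \<le> card V"
  unfolding degree_def using finV by (intro card_mono) auto

lemma wd_lower:
  assumes R: "\<And>z w. R z w \<Longrightarrow> z \<in> V \<and> P \<gamma> z w \<ge> q" and q: "q \<ge> 0" and g: "0 \<le> \<gamma>" "\<gamma> \<le> 1"
    and x: "x \<in> V"
  shows "(R ^^ k) x y \<Longrightarrow> walk_dist V E \<gamma> x k y \<ge> q ^ k"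
proof (induction k arbitrary: y)
  case 0 then show ?case by simp
next
  case (Suc k)
  then obtain z where z: "(R ^^ k) x z" "R z y" by (meson relpowp_Suc_E)
  have zV: "z \<in> V" and Pz: "P \<gamma> z y \<ge> q" using R[OF z(2)] by auto
  have "q ^ Suc k = q ^ k * q" by simp
  also have "\<dots> \<le> walk_dist V E \<gamma> x k z * P \<gamma> z y"
    using Suc.IH[OF z(1)] Pz q wd_nonneg[OF g] by (intro mult_mono) auto
  also have "\<dots> \<le> (\<Sum>z'\<in>V. walk_dist V E \<gamma> x k z' * P \<gamma> z' y)"
    by (rule member_le_sum[OF zV]) (auto intro!: mult_nonneg_nonneg wd_nonneg P_nonneg g finV)
  finally show ?case by simp
qed

lemma wd_supp0: "walk_dist V E 0 w k y \<noteq> 0 \<Longrightarrow> (E ^^ k) w y"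
proof (induction k arbitrary: y)
  case 0 then show ?case by (auto split: if_splits)
next
  case (Suc k)
  then have "(\<Sum>x\<in>V. walk_dist V E 0 w k x * P 0 x y) \<noteq> 0" by simp
  then obtain x where "x \<in> V" "walk_dist V E 0 w k x * P 0 x y \<noteq> 0"
    by (rule sum.not_neutral_contains_not_neutral)
  then have x: "walk_dist V E 0 w k x \<noteq> 0" "P 0 x y \<noteq> 0" by auto
  then have "E x y" by (auto simp: trans_prob_def split: if_splits)
  then show ?case using Suc.IH[OF x(1)] by (rule relpowp_Suc_I[rotated])
qed

lemma mixing_lazy:
  assumes g: "0 < \<gamma>" "\<gamma> < 1"
  shows "\<exists>m>0. \<exists>q>0. \<forall>x\<in>V. \<forall>y\<in>V. walk_dist V E \<gamma> x m y \<ge> q"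
proof -
  define R where "R z w \<longleftrightarrow> z \<in> V \<and> (z = w \<or> E z w)" for z w
  define q0 where "q0 = min \<gamma> ((1 - \<gamma>) / real (card V))"
  have cV: "real (card V) > 0" using nontriv by simp
  have q0: "q0 > 0" using g cV unfolding q0_def by simp
  have Rq: "z \<in> V \<and> P \<gamma> z w \<ge> q0" if "R z w" for z w
  proof -
    have zV: "z \<in> V" using that R_def by auto
    show ?thesis
    proof (cases "z = w")
      case True then show ?thesis using zV Eirr by (simp add: trans_prob_def q0_def)
    next
      case False
      then have Ezw: "E z w" using that R_def by auto
      have "real (degree V E z) \<le> real (card V)" using deg_le by simp
      moreover have "real (degree V E z) > 0" using deg_pos zV by simp
      ultimately have "(1 - \<gamma>) / real (card V) \<le> (1 - \<gamma>) / real (degree V E z)"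
        using g by (intro divide_left_mono) auto
      then show ?thesis using zV False Ezw by (simp add: trans_prob_def q0_def)
    qed
  qed
  obtain N where N: "\<forall>s\<in>V \<times> V. \<exists>n\<le>N. (E ^^ n) (fst s) (snd s)"
    using finite_bound[of "V \<times> V" "\<lambda>s n. (E ^^ n) (fst s) (snd s)"] finV conn_walk by auto
  have pad: "(R ^^ (n + i)) x y" if "(R ^^ n) x y" "y \<in> V" for n i x y
  proof (induction i)
    case 0 then show ?case using that by simp
  next
    case (Suc i)
    have "R y y" using \<open>y \<in> V\<close> R_def by simp
    with Suc show ?case by (simp add: relpowp_Suc_I del: relpowp.simps)
  qed
  have ER: "E \<le> R" using EV R_def by auto
  have all: "walk_dist V E \<gamma> x (Suc N) y \<ge> q0 ^ Suc N" if xy: "x \<in> V" "y \<in> V" for x y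
  proof -
    obtain n where n: "n \<le> N" "(E ^^ n) x y" using N[rule_format, of "(x,y)"] xy by auto
    have "(R ^^ n) x y" using n(2) by (rule relpowp_mono[rotated]) (use EV R_def in auto)
    then have "(R ^^ (n + (Suc N - n))) x y" using xy by (intro pad) auto
    then have "(R ^^ Suc N) x y" using n(1) by simp
    then show ?thesis using wd_lower[where R=R and q=q0 and \<gamma>=\<gamma> and x=x and k="Suc N" and y=y] Rq q0 g xy by auto
  qed
  then show ?thesis using q0 by (intro exI[of _ "Suc N"] conjI exI[of _ "q0 ^ Suc N"]) auto
qed

lemma mixing_even:
  assumes CV: "C \<subseteq> V" and ev: "\<And>x y. x \<in> C \<Longrightarrow> y \<in> C \<Longrightarrow> \<exists>n. even n \<and> (E ^^ n) x y"
  shows "\<exists>m>0. even m \<and> (\<exists>q>0. \<forall>x\<in>C. \<forall>y\<in>C. walk_dist V E 0 x m y \<ge> q)"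
proof -
  define q0 where "q0 = 1 / real (card V)"
  have cV: "real (card V) > 0" using nontriv by simp
  have q0: "q0 > 0" using cV unfolding q0_def by simp
  have Rq: "z \<in> V \<and> P 0 z w \<ge> q0" if "E z w" for z w
  proof -
    have zV: "z \<in> V" using that EV by auto
    have "real (degree V E z) \<le> real (card V)" using deg_le by simp
    moreover have "real (degree V E z) > 0" using deg_pos zV by simp
    ultimately have "1 / real (card V) \<le> 1 / real (degree V E z)"
      by (intro divide_left_mono) auto
    then show ?thesis using zV that Eirr by (auto simp: trans_prob_def q0_def)
  qed
  have finC: "finite (C \<times> C)" using finV CV finite_subset by blast
  obtain N where N: "\<forall>s\<in>C \<times> C. \<exists>n\<le>N. even n \<and> (E ^^ n) (fst s) (snd s)"
    using finite_bound[OF finC, of "\<lambda>s n. even n \<and> (E ^^ n) (fst s) (snd s)"] ev by auto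
  have all: "walk_dist V E 0 x (2 * N + 2) y \<ge> q0 ^ (2 * N + 2)" if xy: "x \<in> C" "y \<in> C" for x y
  proof -
    obtain n where n: "n \<le> N" "even n" "(E ^^ n) x y" using N[rule_format, of "(x,y)"] xy by auto
    have "(E ^^ (n + 2 * ((2 * N + 2 - n) div 2))) x y" using n(3) xy CV by (intro pad2) auto
    moreover have "n + 2 * ((2 * N + 2 - n) div 2) = 2 * N + 2" using n(1,2) by presburger
    ultimately have "(E ^^ (2 * N + 2)) x y" by simp
    then show ?thesis using wd_lower[where R=E and q=q0 and \<gamma>=0 and x=x and k="2 * N + 2" and y=y] Rq q0 xy CV by auto
  qed
  then show ?thesis using q0 by (intro exI[of _ "2 * N + 2"] conjI exI[of _ "q0 ^ (2 * N + 2)"]) auto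
qed

end


context G begin

definition S :: real where "S = (\<Sum>x\<in>V. real (degree V E x))"
definition pi :: "'a \<Rightarrow> real" where "pi x = real (degree V E x) / S"
definition pi_on :: "'a set \<Rightarrow> 'a \<Rightarrow> real" where
  "pi_on X x = (if x \<in> X then 2 * real (degree V E x) / S else 0)"
definition bip :: "'a set \<Rightarrow> bool" where
  "bip X \<longleftrightarrow> X \<subseteq> V \<and> (\<forall>x y. E x y \<longrightarrow> (x \<in> X \<longleftrightarrow> y \<notin> X))"
definition side :: "'a \<Rightarrow> 'a set" where
  "side u = {y \<in> V. \<exists>n. even n \<and> (E ^^ n) u y}"

lemma S_pos: "S > 0"
proof -
  obtain x where "x \<in> V" using nontriv by (metis card.empty ex_in_conv not_numeral_le_zero)
  then have "real (degree V E x) \<le> S" unfolding S_def using finV by (intro member_le_sum) auto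
  moreover have "real (degree V E x) > 0" using deg_pos \<open>x \<in> V\<close> by simp
  ultimately show ?thesis by simp
qed

lemma card_in: "card {x \<in> V. E x y} = degree V E y"
  unfolding degree_def using Esym by (metis)

lemma pi_mass: "(\<Sum>x\<in>V. pi x) = 1"
  using S_pos unfolding pi_def S_def by (simp add: sum_divide_distrib[symmetric])

lemma pi_nonneg: "pi x \<ge> 0" using S_pos unfolding pi_def by simp

lemma pi_step: "y \<in> V \<Longrightarrow> step \<gamma> pi y = pi y"
proof -
  assume y: "y \<in> V"
  have a: "pi x * (if E x y then (1 - \<gamma>) / real (degree V E x) else 0) = (if E x y then (1 - \<gamma>) / S else 0)"
    if "x \<in> V" for x
    using deg_pos[OF that] by (auto simp: pi_def)
  have "step \<gamma> pi y = (\<Sum>x\<in>V. (if x = y then pi x * \<gamma> else 0)) + (\<Sum>x\<in>V. pi x * (if E x y then (1 - \<gamma>) / real (degree V E x) else 0))"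
    unfolding step_def trans_prob_def distrib_left sum.distrib by (simp add: if_distrib cong: if_cong)
  also have "(\<Sum>x\<in>V. (if x = y then pi x * \<gamma> else 0)) = pi y * \<gamma>" using y finV by simp
  also have "(\<Sum>x\<in>V. pi x * (if E x y then (1 - \<gamma>) / real (degree V E x) else 0)) = (\<Sum>x\<in>V. (if E x y then (1 - \<gamma>) / S else 0))"
    by (rule sum.cong) (auto simp: a)
  also have "\<dots> = real (card {x \<in> V. E x y}) * ((1 - \<gamma>) / S)"
    using finV by (simp add: sum.If_cases Int_def)
  also have "\<dots> = pi y * (1 - \<gamma>)" by (simp add: card_in pi_def)
  finally show ?thesis by (simp add: algebra_simps)
qed

lemma bip_compl: "bip X \<Longrightarrow> bip (V - X)"
  unfolding bip_def using EV by blast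

lemma pi_on_step:
  assumes X: "bip X" and y: "y \<in> V"
  shows "step 0 (pi_on X) y = pi_on (V - X) y"
proof -
  have a: "pi_on X x * (if E x y then 1 / real (degree V E x) else 0) = (if x \<in> X \<and> E x y then 2 / S else 0)"
    if "x \<in> V" for x
    using deg_pos[OF that] by (auto simp: pi_on_def)
  have "step 0 (pi_on X) y = (\<Sum>x\<in>V. pi_on X x * (if E x y then 1 / real (degree V E x) else 0))"
    unfolding step_def trans_prob_def by (simp add: if_distrib cong: if_cong)
  also have "\<dots> = (\<Sum>x\<in>V. (if x \<in> X \<and> E x y then 2 / S else 0))"
    by (rule sum.cong) (auto simp: a)
  also have "\<dots> = real (card {x \<in> V. x \<in> X \<and> E x y}) * (2 / S)"
    using finV by (simp add: sum.If_cases Int_def)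
  also have "\<dots> = pi_on (V - X) y"
  proof (cases "y \<in> X")
    case True
    then have e: "{x \<in> V. x \<in> X \<and> E x y} = {}" using X unfolding bip_def by blast
    show ?thesis unfolding e using True by (simp add: pi_on_def)
  next
    case False
    then have e: "{x \<in> V. x \<in> X \<and> E x y} = {x \<in> V. E x y}" using X unfolding bip_def by blast
    show ?thesis unfolding e using False y by (simp add: pi_on_def card_in)
  qed
  finally show ?thesis .
qed

lemma pi_on_sum: "x \<in> V \<Longrightarrow> pi_on X x + pi_on (V - X) x = 2 * pi x"
  by (auto simp: pi_on_def pi_def)

lemma pi_on_nonneg: "pi_on X x \<ge> 0" using S_pos by (simp add: pi_on_def)

lemma pi_on_mass: assumes X: "bip X" shows "(\<Sum>x\<in>V. pi_on X x) = 1"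
proof -
  have "(\<Sum>x\<in>V. pi_on (V - X) x) = (\<Sum>x\<in>V. step 0 (pi_on X) x)"
    by (rule sum.cong) (auto simp: pi_on_step[OF X])
  also have "\<dots> = (\<Sum>x\<in>V. pi_on X x)" by (rule step_mass)
  finally have e: "(\<Sum>x\<in>V. pi_on (V - X) x) = (\<Sum>x\<in>V. pi_on X x)" .
  have "(\<Sum>x\<in>V. pi_on X x) + (\<Sum>x\<in>V. pi_on (V - X) x) = (\<Sum>x\<in>V. 2 * pi x)"
    unfolding sum.distrib[symmetric] by (rule sum.cong) (auto simp: pi_on_sum)
  also have "\<dots> = 2" by (simp add: sum_distrib_left[symmetric] pi_mass)
  finally show ?thesis using e by simp
qed

lemma parity: assumes X: "bip X" shows "(E ^^ n) x y \<Longrightarrow> ((x \<in> X \<longleftrightarrow> y \<in> X) \<longleftrightarrow> even n)"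
proof (induction n arbitrary: y)
  case 0 then show ?case by simp
next
  case (Suc n)
  then obtain z where z: "(E ^^ n) x z" "E z y" by (meson relpowp_Suc_E)
  have "(z \<in> X \<longleftrightarrow> y \<notin> X)" using X z(2) unfolding bip_def by auto
  then show ?case using Suc.IH[OF z(1)] by auto
qed

lemma side_char: assumes X: "bip X" and u: "u \<in> V" shows "side u = {y \<in> V. (y \<in> X \<longleftrightarrow> u \<in> X)}"
proof -
  have "y \<in> side u \<longleftrightarrow> y \<in> V \<and> (y \<in> X \<longleftrightarrow> u \<in> X)" for y
  proof
    assume "y \<in> side u"
    then obtain n where n: "even n" "(E ^^ n) u y" "y \<in> V" unfolding side_def by auto
    have "(u \<in> X \<longleftrightarrow> y \<in> X) \<longleftrightarrow> even n" by (rule parity[OF X n(2)])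
    then show "y \<in> V \<and> (y \<in> X \<longleftrightarrow> u \<in> X)" using n by blast
  next
    assume h: "y \<in> V \<and> (y \<in> X \<longleftrightarrow> u \<in> X)"
    then obtain n where n: "(E ^^ n) u y" using conn_walk u by blast
    have "(u \<in> X \<longleftrightarrow> y \<in> X) \<longleftrightarrow> even n" by (rule parity[OF X n])
    then have "even n" using h by blast
    then show "y \<in> side u" using n h unfolding side_def by auto
  qed
  then show ?thesis by blast
qed

lemma side_bip: assumes X: "bip X" and u: "u \<in> V" shows "bip (side u)"
proof (cases "u \<in> X")
  case True
  then have "side u = X" using side_char[OF X u] X unfolding bip_def by auto
  then show ?thesis using X by simp
next
  case False
  then have "side u = V - X" using side_char[OF X u] X unfolding bip_def by auto
  then show ?thesis using bip_compl[OF X] by simp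
qed

lemma bipartite_bip: "bipartite V E \<Longrightarrow> \<exists>X. bip X"
  unfolding bipartite_def bip_def by auto

lemma side_self: "u \<in> V \<Longrightarrow> u \<in> side u"
  unfolding side_def using relpowp_0_I[of E u] even_zero by blast

lemma nonbip_even: assumes nb: "\<not> bipartite V E" and x: "x \<in> V" and y: "y \<in> V"
  shows "\<exists>n. even n \<and> (E ^^ n) x y"
proof (rule ccontr)
  assume no: "\<not> (\<exists>n. even n \<and> (E ^^ n) x y)"
  have "bip (side x)"
    unfolding bip_def
  proof (intro conjI allI impI)
    show "side x \<subseteq> V" unfolding side_def by auto
    fix a b assume ab: "E a b"
    have aV: "a \<in> V" and bV: "b \<in> V" using EV[OF ab] by auto
    show "a \<in> side x \<longleftrightarrow> b \<notin> side x"
    proof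
      assume "a \<in> side x"
      then obtain na where na: "even na" "(E ^^ na) x a" unfolding side_def by auto
      show "b \<notin> side x"
      proof
        assume "b \<in> side x"
        then obtain nb where nb: "even nb" "(E ^^ nb) x b" unfolding side_def by auto
        obtain L where L: "(E ^^ L) b y" using conn_walk bV y by blast
        have w1: "(E ^^ (nb + L)) x y" using nb(2) L by (rule relpowp_trans)
        have "(E ^^ Suc na) x b" using na(2) ab by (rule relpowp_Suc_I)
        then have w2: "(E ^^ (Suc na + L)) x y" using L by (rule relpowp_trans)
        show False using no w1 w2 na(1) nb(1) by (metis even_add even_Suc)
      qed
    next
      assume bn: "b \<notin> side x"
      obtain n where n: "(E ^^ n) x a" using conn_walk x aV by blast
      show "a \<in> side x"
      proof (rule ccontr)
        assume "a \<notin> side x"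
        then have "odd n" using n aV unfolding side_def by auto
        then have "even (Suc n)" by simp
        moreover have "(E ^^ Suc n) x b" using n ab by (rule relpowp_Suc_I)
        ultimately have "b \<in> side x" using bV unfolding side_def by blast
        then show False using bn by simp
      qed
    qed
  qed
  then show False using nb unfolding bipartite_def bip_def by blast
qed

end


context G begin

lemma conv_pi:
  assumes w: "w \<in> V" and g: "0 \<le> \<gamma>" "\<gamma> < 1" and ap: "0 < \<gamma> \<or> \<not> bipartite V E"
  shows "(\<lambda>k. \<Sum>x\<in>V. \<bar>walk_dist V E \<gamma> w k x - pi x\<bar>) \<longlonglongrightarrow> 0"
proof -
  obtain m q where m: "m > 0" and q: "q > 0" and mix: "\<And>x y. x \<in> V \<Longrightarrow> y \<in> V \<Longrightarrow> walk_dist V E \<gamma> x m y \<ge> q"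
  proof (cases "0 < \<gamma>")
    case True then show ?thesis using mixing_lazy[OF True g(2)] that by blast
  next
    case False
    then have g0: "\<gamma> = 0" using g by simp
    have nb: "\<not> bipartite V E" using ap False by simp
    obtain m where "m > 0" "\<exists>q>0. \<forall>x\<in>V. \<forall>y\<in>V. walk_dist V E 0 x m y \<ge> q"
      using mixing_even[OF order_refl nonbip_even[OF nb]] by blast
    then show ?thesis using that g0 by blast
  qed
  define d where "d k x = walk_dist V E \<gamma> w k x - pi x" for k x
  have g1: "\<gamma> \<le> 1" using g by simp
  have dstep: "d (Suc k) y = step \<gamma> (d k) y" if "y \<in> V" for k y
    unfolding d_def step_diff wd_Suc pi_step[OF that] by simp
  obtain x0 where x0: "x0 \<in> V" using w by blast
  have "(\<lambda>k. \<Sum>x\<in>V. \<bar>d k x\<bar>) \<longlonglongrightarrow> 0"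
  proof (rule conv_abstract[where C = V and Q = "P \<gamma>" and K = "\<lambda>x y. walk_dist V E \<gamma> x m y" and \<rho> = "\<lambda>_. q" and m = m])
    show "finite V" by (rule finV)
    show "V \<noteq> {}" using w by blast
    show "\<And>x. x \<in> V \<Longrightarrow> (\<Sum>y\<in>V. P \<gamma> x y) = 1" by (rule P_rowsum)
    show "\<And>x y. x \<in> V \<Longrightarrow> y \<in> V \<Longrightarrow> P \<gamma> x y \<ge> 0" using g g1 by (simp add: P_nonneg)
    show "\<And>x. x \<in> V \<Longrightarrow> (\<Sum>y\<in>V. walk_dist V E \<gamma> x m y) = 1" by (rule wd_mass)
    show "\<And>x y. x \<in> V \<Longrightarrow> y \<in> V \<Longrightarrow> walk_dist V E \<gamma> x m y \<ge> q" by (rule mix)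
    have "card V > 0" using w finV card_gt_0_iff by blast
    then show "(\<Sum>y\<in>V. q) > 0" using q by simp
    show "\<And>k y. y \<in> V \<Longrightarrow> d (Suc k) y = (\<Sum>x\<in>V. d k x * P \<gamma> x y)"
      using dstep by (simp add: step_def)
    show "\<And>k y. y \<in> V \<Longrightarrow> d (k + m) y = (\<Sum>x\<in>V. d k x * walk_dist V E \<gamma> x m y)"
      by (rule seq_kernel[where f = d]) (simp add: dstep)
    show "\<And>k. (\<Sum>x\<in>V. d k x) = 0" unfolding d_def sum_subtractf using wd_mass[OF w] pi_mass by simp
    show "\<And>j x. x \<in> V - V \<Longrightarrow> d (j * m) x = 0" by simp
  qed simp
  then show ?thesis unfolding d_def .
qed

definition alt :: "'a \<Rightarrow> nat \<Rightarrow> 'a \<Rightarrow> real" where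
  "alt u k = (if even k then pi_on (side u) else pi_on (V - side u))"

lemma conv_bip:
  assumes u: "u \<in> V" and b: "bipartite V E"
  shows "(\<lambda>k. \<Sum>x\<in>V. \<bar>walk_dist V E 0 u k x - alt u k x\<bar>) \<longlonglongrightarrow> 0"
proof -
  obtain X where X: "bip X" using bipartite_bip[OF b] by blast
  define A where "A = side u"
  have A: "bip A" unfolding A_def by (rule side_bip[OF X u])
  have AV: "A \<subseteq> V" using A unfolding bip_def by simp
  have uA: "u \<in> A" unfolding A_def by (rule side_self[OF u])
  have evA: "\<exists>n. even n \<and> (E ^^ n) x y" if "x \<in> A" "y \<in> A" for x y
  proof -
    have xy: "x \<in> V" "y \<in> V" "(x \<in> X \<longleftrightarrow> u \<in> X)" "(y \<in> X \<longleftrightarrow> u \<in> X)"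
      using that side_char[OF X u] unfolding A_def by auto
    obtain n where n: "(E ^^ n) x y" using conn_walk xy by blast
    have "(x \<in> X \<longleftrightarrow> y \<in> X) \<longleftrightarrow> even n" by (rule parity[OF X n])
    then show ?thesis using n xy by blast
  qed
  obtain m q where m: "m > 0" "even m" and q: "q > 0" and mix: "\<And>x y. x \<in> A \<Longrightarrow> y \<in> A \<Longrightarrow> walk_dist V E 0 x m y \<ge> q"
    using mixing_even[OF AV evA] by blast
  define d where "d k x = walk_dist V E 0 u k x - alt u k x" for k x
  have altstep: "alt u (Suc k) y = step 0 (alt u k) y" if "y \<in> V" for k y
  proof (cases "even k")
    case True then show ?thesis unfolding alt_def using pi_on_step[OF A that] by (simp add: A_def)
  next
    case False
    have "V - (V - A) = A" using AV by blast
    then show ?thesis unfolding alt_def using pi_on_step[OF bip_compl[OF A] that] False by (simp add: A_def)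
  qed
  have dstep: "d (Suc k) y = step 0 (d k) y" if "y \<in> V" for k y
    unfolding d_def step_diff wd_Suc altstep[OF that] by simp
  have "(\<lambda>k. \<Sum>x\<in>V. \<bar>d k x\<bar>) \<longlonglongrightarrow> 0"
  proof (rule conv_abstract[where C = A and Q = "P 0" and K = "\<lambda>x y. walk_dist V E 0 x m y" and \<rho> = "\<lambda>y. if y \<in> A then q else 0" and m = m])
    show "finite V" by (rule finV)
    show "A \<subseteq> V" by (rule AV)
    show "A \<noteq> {}" using uA by blast
    show "\<And>x. x \<in> V \<Longrightarrow> (\<Sum>y\<in>V. P 0 x y) = 1" by (rule P_rowsum)
    show "\<And>x y. x \<in> V \<Longrightarrow> y \<in> V \<Longrightarrow> P 0 x y \<ge> 0" by (simp add: P_nonneg)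
    show "\<And>x. x \<in> V \<Longrightarrow> (\<Sum>y\<in>V. walk_dist V E 0 x m y) = 1" by (rule wd_mass)
    show "\<And>x y. x \<in> A \<Longrightarrow> y \<in> V \<Longrightarrow> walk_dist V E 0 x m y \<ge> (if y \<in> A then q else 0)"
      using mix wd_nonneg[of 0] by simp
    have "q \<le> (\<Sum>y\<in>V. if y \<in> A then q else 0)"
      using member_le_sum[of u V "\<lambda>y. if y \<in> A then q else 0"] uA u finV q by simp
    then show "(\<Sum>y\<in>V. if y \<in> A then q else 0) > 0" using q by simp
    show "\<And>k y. y \<in> V \<Longrightarrow> d (Suc k) y = (\<Sum>x\<in>V. d k x * P 0 x y)"
      using dstep by (simp add: step_def)
    show "\<And>k y. y \<in> V \<Longrightarrow> d (k + m) y = (\<Sum>x\<in>V. d k x * walk_dist V E 0 x m y)"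
      by (rule seq_kernel[where f = d]) (simp add: dstep)
    show "\<And>k. (\<Sum>x\<in>V. d k x) = 0" unfolding d_def sum_subtractf alt_def
      using wd_mass[OF u] pi_on_mass[OF A] pi_on_mass[OF bip_compl[OF A]] by (simp add: A_def)
    show "\<And>j x. x \<in> V - A \<Longrightarrow> d (j * m) x = 0"
    proof -
      fix j x assume x: "x \<in> V - A"
      have ev: "even (j * m)" using m by simp
      have "walk_dist V E 0 u (j * m) x = 0"
      proof (rule ccontr)
        assume "walk_dist V E 0 u (j * m) x \<noteq> 0"
        then have "(E ^^ (j * m)) u x" by (rule wd_supp0)
        then have "x \<in> A" using ev x unfolding A_def side_def by blast
        then show False using x by simp
      qed
      then show "d (j * m) x = 0" unfolding d_def alt_def using ev x by (simp add: pi_on_def A_def)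
    qed
  qed
  then show ?thesis unfolding d_def .
qed

end


context G begin

definition cost :: "('a \<Rightarrow> 'a \<Rightarrow> real) \<Rightarrow> real" where
  "cost T = (\<Sum>x\<in>V. \<Sum>y\<in>V. real (graph_dist E x y) * T x y)"

definition prob :: "('a \<Rightarrow> real) \<Rightarrow> bool" where
  "prob \<mu> \<longleftrightarrow> (\<forall>x\<in>V. \<mu> x \<ge> 0) \<and> (\<Sum>x\<in>V. \<mu> x) = 1"

abbreviation W where "W \<equiv> wasserstein V E"

lemma W_def': "W \<mu> \<nu> = Inf {cost T | T. transport_plan V \<mu> \<nu> T}"
  unfolding wasserstein_def cost_def by simp

lemma gd_refl: "graph_dist E x x = 0"
  unfolding graph_dist_def by (rule Least_eq_0) simp

lemma walk_rev: "(E ^^ n) x y \<Longrightarrow> (E ^^ n) y x"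
proof (induction n arbitrary: y)
  case 0 then show ?case by simp
next
  case (Suc n)
  then obtain z where z: "(E ^^ n) x z" "E z y" by (meson relpowp_Suc_E)
  have "E y z" using z(2) by (rule Esym)
  then show ?case using Suc.IH[OF z(1)] by (rule relpowp_Suc_I2)
qed

lemma gd_sym: "graph_dist E x y = graph_dist E y x"
proof -
  have "(\<lambda>n. (E ^^ n) x y) = (\<lambda>n. (E ^^ n) y x)" using walk_rev by blast
  then show ?thesis unfolding graph_dist_def by simp
qed

lemma gd_walk: "x \<in> V \<Longrightarrow> y \<in> V \<Longrightarrow> (E ^^ graph_dist E x y) x y"
  unfolding graph_dist_def using conn_walk by (metis LeastI_ex)

lemma gd_ge1: "x \<in> V \<Longrightarrow> y \<in> V \<Longrightarrow> x \<noteq> y \<Longrightarrow> graph_dist E x y \<ge> 1"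
  using gd_walk[of x y] by (cases "graph_dist E x y") auto

lemma gd_edge: "E x y \<Longrightarrow> graph_dist E x y = 1"
proof -
  assume e: "E x y"
  have "x \<noteq> y" using e Eirr by auto
  then have "graph_dist E x y \<ge> 1" using gd_ge1 EV[OF e] by auto
  moreover have "graph_dist E x y \<le> 1" unfolding graph_dist_def using e by (intro Least_le) (simp only: relpowp_1)
  ultimately show ?thesis by simp
qed

definition D :: real where "D = Max ((\<lambda>p. real (graph_dist E (fst p) (snd p))) ` (V \<times> V))"

lemma gd_le_D: "x \<in> V \<Longrightarrow> y \<in> V \<Longrightarrow> real (graph_dist E x y) \<le> D"
  unfolding D_def using finV by (intro Max_ge) (auto intro: image_eqI[of _ _ "(x, y)"])

lemma D_nonneg: "D \<ge> 0"
proof -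
  obtain x where "x \<in> V" using nontriv by (metis card.empty ex_in_conv not_numeral_le_zero)
  then show ?thesis using gd_le_D[of x x] by simp
qed

lemma plan_nonneg: "transport_plan V \<mu> \<nu> T \<Longrightarrow> cost T \<ge> 0"
  unfolding cost_def transport_plan_def by (auto intro!: sum_nonneg mult_nonneg_nonneg)

lemma prod_plan: "prob \<mu> \<Longrightarrow> prob \<nu> \<Longrightarrow> transport_plan V \<mu> \<nu> (\<lambda>x y. \<mu> x * \<nu> y)"
  unfolding transport_plan_def prob_def by (auto simp: sum_distrib_left[symmetric] sum_distrib_right[symmetric])

lemma W_le: "transport_plan V \<mu> \<nu> T \<Longrightarrow> W \<mu> \<nu> \<le> cost T"
  unfolding W_def' by (rule cInf_lower) (auto intro!: bdd_belowI[of _ 0] plan_nonneg)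

lemma W_ge: "prob \<mu> \<Longrightarrow> prob \<nu> \<Longrightarrow> (\<And>T. transport_plan V \<mu> \<nu> T \<Longrightarrow> c \<le> cost T) \<Longrightarrow> c \<le> W \<mu> \<nu>"
  unfolding W_def' by (rule cInf_greatest) (auto dest: prod_plan)

lemma W_nonneg: "prob \<mu> \<Longrightarrow> prob \<nu> \<Longrightarrow> W \<mu> \<nu> \<ge> 0"
  by (rule W_ge) (auto intro: plan_nonneg)

lemma W_approx: assumes "prob \<mu>" "prob \<nu>" "\<epsilon> > 0"
  shows "\<exists>T. transport_plan V \<mu> \<nu> T \<and> cost T < W \<mu> \<nu> + \<epsilon>"
proof -
  have ne: "{cost T | T. transport_plan V \<mu> \<nu> T} \<noteq> {}" using prod_plan[OF assms(1,2)] by blast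
  have "Inf {cost T | T. transport_plan V \<mu> \<nu> T} < W \<mu> \<nu> + \<epsilon>" using assms(3) by (simp add: W_def')
  from cInf_lessD[OF ne this] show ?thesis by blast
qed

lemma plan_transp: "transport_plan V \<mu> \<nu> T \<Longrightarrow> transport_plan V \<nu> \<mu> (\<lambda>x y. T y x)"
  unfolding transport_plan_def by auto

lemma cost_transp: "cost (\<lambda>x y. T y x) = cost T"
  unfolding cost_def by (subst sum.swap) (simp add: gd_sym)

lemma W_sym: "W \<mu> \<nu> = W \<nu> \<mu>"
proof -
  have "{cost T | T. transport_plan V \<mu> \<nu> T} = {cost T | T. transport_plan V \<nu> \<mu> T}"
  proof (intro set_eqI iffI)
    fix c assume "c \<in> {cost T | T. transport_plan V \<mu> \<nu> T}"
    then obtain T where "transport_plan V \<mu> \<nu> T" "c = cost T" by auto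
    then show "c \<in> {cost T | T. transport_plan V \<nu> \<mu> T}"
      using plan_transp cost_transp by (metis (mono_tags, lifting) mem_Collect_eq)
  next
    fix c assume "c \<in> {cost T | T. transport_plan V \<nu> \<mu> T}"
    then obtain T where "transport_plan V \<nu> \<mu> T" "c = cost T" by auto
    then show "c \<in> {cost T | T. transport_plan V \<mu> \<nu> T}"
      using plan_transp cost_transp by (metis (mono_tags, lifting) mem_Collect_eq)
  qed
  then show ?thesis unfolding W_def' by simp
qed

lemma W_diag: assumes "prob \<mu>" shows "W \<mu> \<mu> = 0"
proof -
  have pl: "transport_plan V \<mu> \<mu> (\<lambda>x y. if x = y then \<mu> x else 0)"
    using assms finV unfolding transport_plan_def prob_def by (auto simp: if_distrib cong: if_cong)
  have "cost (\<lambda>x y. if x = y then \<mu> x else 0) = 0"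
    unfolding cost_def by (intro sum.neutral ballI) (auto simp: gd_refl)
  then have "W \<mu> \<mu> \<le> 0" using W_le[OF pl] by simp
  then show ?thesis using W_nonneg[OF assms assms] by simp
qed

end


context G begin

lemma W_pert:
  assumes pm: "prob \<mu>" and pn: "prob \<nu>" and pn': "prob \<nu>'"
  shows "W \<mu> \<nu>' \<le> W \<mu> \<nu> + D * (\<Sum>y\<in>V. \<bar>\<nu> y - \<nu>' y\<bar>)"
proof (rule field_le_epsilon)
  fix \<epsilon> :: real assume eps: "\<epsilon> > 0"
  obtain T0 where T0: "transport_plan V \<mu> \<nu> T0" and c0: "cost T0 < W \<mu> \<nu> + \<epsilon>"
    using W_approx[OF pm pn eps] by blast
  have T0nn: "\<And>x y. x \<in> V \<Longrightarrow> y \<in> V \<Longrightarrow> T0 x y \<ge> 0"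
    and T0r: "\<And>x. x \<in> V \<Longrightarrow> (\<Sum>y\<in>V. T0 x y) = \<mu> x"
    and T0c: "\<And>y. y \<in> V \<Longrightarrow> (\<Sum>x\<in>V. T0 x y) = \<nu> y"
    using T0 unfolding transport_plan_def by auto
  have nn: "\<And>y. y \<in> V \<Longrightarrow> \<nu> y \<ge> 0" and nn': "\<And>y. y \<in> V \<Longrightarrow> \<nu>' y \<ge> 0"
    and mnn: "\<And>y. y \<in> V \<Longrightarrow> \<mu> y \<ge> 0"
    using pn pn' pm unfolding prob_def by auto
  define mn where "mn y = min (\<nu> y) (\<nu>' y)" for y
  define T1 where "T1 x y = (if \<nu> y = 0 then 0 else T0 x y * (mn y / \<nu> y))" for x y
  define e where "e x = \<mu> x - (\<Sum>y\<in>V. T1 x y)" for x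
  define f where "f y = \<nu>' y - mn y" for y
  define r where "r = 1 - (\<Sum>y\<in>V. mn y)"
  define T where "T x y = T1 x y + e x * f y / r" for x y
  have mn_nn: "y \<in> V \<Longrightarrow> mn y \<ge> 0" for y using nn nn' by (simp add: mn_def)
  have T1nn: "T1 x y \<ge> 0" if "x \<in> V" "y \<in> V" for x y
    using T0nn[OF that] mn_nn[OF that(2)] nn[OF that(2)] by (simp add: T1_def)
  have T1le: "T1 x y \<le> T0 x y" if "x \<in> V" "y \<in> V" for x y
  proof (cases "\<nu> y = 0")
    case True then show ?thesis using T0nn[OF that] by (simp add: T1_def)
  next
    case False
    then have "mn y / \<nu> y \<le> 1" using nn[OF that(2)] by (simp add: mn_def)
    then have "T0 x y * (mn y / \<nu> y) \<le> T0 x y * 1" using T0nn[OF that] by (rule mult_left_mono)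
    then show ?thesis using False by (simp add: T1_def)
  qed
  have T1c: "(\<Sum>x\<in>V. T1 x y) = mn y" if "y \<in> V" for y
  proof (cases "\<nu> y = 0")
    case True then show ?thesis using nn'[OF that] by (simp add: T1_def mn_def)
  next
    case False
    have "(\<Sum>x\<in>V. T1 x y) = (\<Sum>x\<in>V. T0 x y * (mn y / \<nu> y))"
      using False by (intro sum.cong) (simp_all add: T1_def)
    also have "\<dots> = (\<Sum>x\<in>V. T0 x y) * (mn y / \<nu> y)" by (rule sum_distrib_right[symmetric])
    also have "\<dots> = mn y" using False T0c[OF that] by simp
    finally show ?thesis .
  qed
  have e_nn: "e x \<ge> 0" if "x \<in> V" for x
  proof -
    have "(\<Sum>y\<in>V. T1 x y) \<le> (\<Sum>y\<in>V. T0 x y)" by (rule sum_mono) (simp add: T1le that)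
    then show ?thesis using T0r[OF that] by (simp add: e_def)
  qed
  have f_nn: "f y \<ge> 0" for y by (simp add: f_def mn_def)
  have se: "(\<Sum>x\<in>V. e x) = r"
  proof -
    have "(\<Sum>x\<in>V. e x) = (\<Sum>x\<in>V. \<mu> x) - (\<Sum>x\<in>V. \<Sum>y\<in>V. T1 x y)" by (simp add: e_def sum_subtractf)
    also have "(\<Sum>x\<in>V. \<Sum>y\<in>V. T1 x y) = (\<Sum>y\<in>V. \<Sum>x\<in>V. T1 x y)" by (rule sum.swap)
    also have "\<dots> = (\<Sum>y\<in>V. mn y)" by (rule sum.cong) (simp_all add: T1c)
    finally show ?thesis using pm by (simp add: prob_def r_def)
  qed
  have sf: "(\<Sum>y\<in>V. f y) = r" using pn' by (simp add: f_def sum_subtractf prob_def r_def)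
  have r_nn: "r \<ge> 0" using sf f_nn by (metis sum_nonneg)
  have e0: "e x = 0" if "r = 0" "x \<in> V" for x
    using se that e_nn finV by (metis sum_nonneg_eq_0_iff)
  have f0: "f y = 0" if "r = 0" "y \<in> V" for y
    using sf that f_nn finV by (metis sum_nonneg_eq_0_iff)
  have plan: "transport_plan V \<mu> \<nu>' T"
    unfolding transport_plan_def
  proof (intro conjI ballI)
    fix x y assume "x \<in> V" "y \<in> V"
    then show "T x y \<ge> 0" unfolding T_def using T1nn e_nn f_nn r_nn by (auto intro!: add_nonneg_nonneg divide_nonneg_nonneg)
  next
    fix x assume x: "x \<in> V"
    have "(\<Sum>y\<in>V. T x y) = (\<Sum>y\<in>V. T1 x y) + e x * (\<Sum>y\<in>V. f y) / r"
      unfolding T_def sum.distrib by (simp add: sum_distrib_left sum_divide_distrib)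
    also have "\<dots> = \<mu> x"
    proof (cases "r = 0")
      case True then show ?thesis using e0[OF True x] by (simp add: e_def)
    next
      case False then show ?thesis using sf by (simp add: e_def)
    qed
    finally show "(\<Sum>y\<in>V. T x y) = \<mu> x" .
  next
    fix y assume y: "y \<in> V"
    have "(\<Sum>x\<in>V. T x y) = (\<Sum>x\<in>V. T1 x y) + (\<Sum>x\<in>V. e x) * f y / r"
      unfolding T_def sum.distrib by (simp add: sum_distrib_right sum_divide_distrib)
    also have "\<dots> = \<nu>' y"
    proof (cases "r = 0")
      case True then show ?thesis using f0[OF True y] T1c[OF y] by (simp add: f_def)
    next
      case False then show ?thesis using se T1c[OF y] by (simp add: f_def)
    qed
    finally show "(\<Sum>x\<in>V. T x y) = \<nu>' y" .
  qed
  have cT1: "cost T1 \<le> cost T0" unfolding cost_def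
    by (intro sum_mono mult_left_mono) (auto simp: T1le)
  have cextra: "(\<Sum>x\<in>V. \<Sum>y\<in>V. real (graph_dist E x y) * (e x * f y / r)) \<le> D * r"
  proof -
    have "(\<Sum>x\<in>V. \<Sum>y\<in>V. real (graph_dist E x y) * (e x * f y / r)) \<le> (\<Sum>x\<in>V. \<Sum>y\<in>V. D * (e x * f y / r))"
      by (intro sum_mono mult_right_mono) (auto simp: gd_le_D e_nn f_nn r_nn)
    also have "\<dots> = (\<Sum>x\<in>V. D * e x / r * (\<Sum>y\<in>V. f y))"
    proof (rule sum.cong)
      fix x assume "x \<in> V"
      show "(\<Sum>y\<in>V. D * (e x * f y / r)) = D * e x / r * (\<Sum>y\<in>V. f y)"
        unfolding sum_distrib_left by (rule sum.cong) (simp_all add: field_simps)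
    qed simp
    also have "\<dots> = (\<Sum>x\<in>V. e x) * (D * (\<Sum>y\<in>V. f y) / r)"
      unfolding sum_distrib_right by (rule sum.cong) (simp_all add: field_simps)
    also have "\<dots> \<le> D * r"
    proof (cases "r = 0")
      case True then show ?thesis by simp
    next
      case False then show ?thesis using se sf by simp
    qed
    finally show ?thesis .
  qed
  have "cost T = cost T1 + (\<Sum>x\<in>V. \<Sum>y\<in>V. real (graph_dist E x y) * (e x * f y / r))"
    unfolding cost_def T_def by (simp add: distrib_left sum.distrib)
  also have "\<dots> \<le> cost T0 + D * r" using cT1 cextra by simp
  finally have cT: "cost T \<le> cost T0 + D * r" .
  have "r = (\<Sum>y\<in>V. f y)" using sf by simp
  also have "\<dots> \<le> (\<Sum>y\<in>V. \<bar>\<nu> y - \<nu>' y\<bar>)" by (rule sum_mono) (simp add: f_def mn_def)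
  finally have rle: "r \<le> (\<Sum>y\<in>V. \<bar>\<nu> y - \<nu>' y\<bar>)" .
  have "W \<mu> \<nu>' \<le> cost T" by (rule W_le[OF plan])
  also have "\<dots> \<le> cost T0 + D * r" by (rule cT)
  also have "\<dots> \<le> cost T0 + D * (\<Sum>y\<in>V. \<bar>\<nu> y - \<nu>' y\<bar>)" using rle D_nonneg by (simp add: mult_left_mono)
  finally show "W \<mu> \<nu>' \<le> W \<mu> \<nu> + D * (\<Sum>y\<in>V. \<bar>\<nu> y - \<nu>' y\<bar>) + \<epsilon>" using c0 by simp
qed

lemma W_lip:
  assumes "prob \<mu>" "prob \<nu>" "prob \<mu>'" "prob \<nu>'"
  shows "\<bar>W \<mu> \<nu> - W \<mu>' \<nu>'\<bar> \<le> D * ((\<Sum>x\<in>V. \<bar>\<mu> x - \<mu>' x\<bar>) + (\<Sum>y\<in>V. \<bar>\<nu> y - \<nu>' y\<bar>))"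
proof -
  have sym: "(\<Sum>x\<in>V. \<bar>g x - h x\<bar>) = (\<Sum>x\<in>V. \<bar>h x - g x\<bar>)" for g h :: "'a \<Rightarrow> real"
    by (simp add: abs_minus_commute)
  have a: "W \<mu> \<nu>' \<le> W \<mu> \<nu> + D * (\<Sum>y\<in>V. \<bar>\<nu> y - \<nu>' y\<bar>)" by (rule W_pert) (use assms in auto)
  have b: "W \<nu>' \<mu>' \<le> W \<nu>' \<mu> + D * (\<Sum>y\<in>V. \<bar>\<mu> y - \<mu>' y\<bar>)" by (rule W_pert) (use assms in auto)
  have c: "W \<mu> \<nu> \<le> W \<mu> \<nu>' + D * (\<Sum>y\<in>V. \<bar>\<nu>' y - \<nu> y\<bar>)" by (rule W_pert) (use assms in auto)
  have d: "W \<nu>' \<mu> \<le> W \<nu>' \<mu>' + D * (\<Sum>y\<in>V. \<bar>\<mu>' y - \<mu> y\<bar>)" by (rule W_pert) (use assms in auto)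
  show ?thesis using a b c d W_sym[of \<mu>' \<nu>'] W_sym[of \<mu> \<nu>'] sym[of \<mu> \<mu>'] sym[of \<nu> \<nu>'] D_nonneg
    by (simp add: abs_le_iff algebra_simps)
qed

lemma W_stepplan:
  assumes pm: "prob \<mu>" and g: "0 \<le> \<gamma>" "\<gamma> \<le> 1"
  shows "W \<mu> (step \<gamma> \<mu>) \<le> 1 - \<gamma>"
proof -
  have plan: "transport_plan V \<mu> (step \<gamma> \<mu>) (\<lambda>x y. \<mu> x * P \<gamma> x y)"
    unfolding transport_plan_def
  proof (intro conjI ballI)
    fix x y assume "x \<in> V" "y \<in> V"
    then show "\<mu> x * P \<gamma> x y \<ge> 0" using pm g P_nonneg unfolding prob_def by (auto intro: mult_nonneg_nonneg)
  next
    fix x assume "x \<in> V"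
    then show "(\<Sum>y\<in>V. \<mu> x * P \<gamma> x y) = \<mu> x" by (simp add: sum_distrib_left[symmetric] P_rowsum)
  next
    fix y assume "y \<in> V"
    then show "(\<Sum>x\<in>V. \<mu> x * P \<gamma> x y) = step \<gamma> \<mu> y" by (simp add: step_def)
  qed
  have row: "(\<Sum>y\<in>V. real (graph_dist E x y) * (\<mu> x * P \<gamma> x y)) = \<mu> x * (1 - \<gamma>)" if x: "x \<in> V" for x
  proof -
    have a: "real (graph_dist E x y) * P \<gamma> x y = (if E x y then (1 - \<gamma>) / real (degree V E x) else 0)" for y
      by (cases "x = y") (auto simp: trans_prob_def gd_refl gd_edge Eirr)
    have "(\<Sum>y\<in>V. real (graph_dist E x y) * (\<mu> x * P \<gamma> x y)) = \<mu> x * (\<Sum>y\<in>V. real (graph_dist E x y) * P \<gamma> x y)"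
      by (simp add: sum_distrib_left algebra_simps)
    also have "(\<Sum>y\<in>V. real (graph_dist E x y) * P \<gamma> x y) = (\<Sum>y\<in>V. (if E x y then (1 - \<gamma>) / real (degree V E x) else 0))"
      by (simp add: a)
    also have "\<dots> = real (card {y \<in> V. E x y}) * ((1 - \<gamma>) / real (degree V E x))"
      using finV by (simp add: sum.If_cases Int_def)
    also have "\<dots> = 1 - \<gamma>" using deg_pos[OF x] by (simp add: degree_def)
    finally show ?thesis .
  qed
  have "cost (\<lambda>x y. \<mu> x * P \<gamma> x y) = (\<Sum>x\<in>V. \<mu> x) * (1 - \<gamma>)"
    unfolding cost_def by (simp add: row sum_distrib_right)
  then have "cost (\<lambda>x y. \<mu> x * P \<gamma> x y) = 1 - \<gamma>" using pm by (simp add: prob_def)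
  then show ?thesis using W_le[OF plan] by simp
qed

lemma W_lower:
  assumes pm: "prob \<mu>" and pn: "prob \<nu>" and supp: "\<And>x. x \<in> V - A \<Longrightarrow> \<mu> x = 0"
  shows "(\<Sum>y\<in>V - A. \<nu> y) \<le> W \<mu> \<nu>"
proof (rule W_ge[OF pm pn])
  fix T assume T: "transport_plan V \<mu> \<nu> T"
  have Tnn: "\<And>x y. x \<in> V \<Longrightarrow> y \<in> V \<Longrightarrow> T x y \<ge> 0"
    and Tr: "\<And>x. x \<in> V \<Longrightarrow> (\<Sum>y\<in>V. T x y) = \<mu> x"
    and Tc: "\<And>y. y \<in> V \<Longrightarrow> (\<Sum>x\<in>V. T x y) = \<nu> y"
    using T unfolding transport_plan_def by auto
  have T0: "T x y = 0" if "x \<in> V - A" "y \<in> V" for x y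
  proof -
    have "(\<Sum>y\<in>V. T x y) = 0" using Tr supp that by auto
    then show ?thesis using sum_nonneg_eq_0_iff[OF finV, of "T x"] Tnn that by auto
  qed
  have "(\<Sum>y\<in>V - A. \<nu> y) = (\<Sum>y\<in>V - A. \<Sum>x\<in>V. T x y)" by (rule sum.cong) (auto simp: Tc)
  also have "\<dots> \<le> (\<Sum>y\<in>V - A. \<Sum>x\<in>V. real (graph_dist E x y) * T x y)"
  proof (intro sum_mono)
    fix y x assume y: "y \<in> V - A" and x: "x \<in> V"
    show "T x y \<le> real (graph_dist E x y) * T x y"
    proof (cases "x \<in> A")
      case True
      then have "x \<noteq> y" using y by auto
      then have "real (graph_dist E x y) \<ge> 1" using gd_ge1 x y by auto
      then show ?thesis using Tnn[of x y] x y by (simp add: mult_le_cancel_right1)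
    next
      case False then show ?thesis using T0 x y by simp
    qed
  qed
  also have "\<dots> = (\<Sum>x\<in>V. \<Sum>y\<in>V - A. real (graph_dist E x y) * T x y)" by (rule sum.swap)
  also have "\<dots> \<le> cost T" unfolding cost_def
    by (intro sum_mono sum_mono2) (auto intro!: mult_nonneg_nonneg Tnn simp: finV)
  finally show "(\<Sum>y\<in>V - A. \<nu> y) \<le> cost T" .
qed

end


lemma squeeze:
  fixes f a b :: "nat \<Rightarrow> real"
  assumes bnd: "\<And>k. \<bar>f k - L\<bar> \<le> D * (a k + b k)" and a: "a \<longlonglongrightarrow> 0" and b: "b \<longlonglongrightarrow> 0"
  shows "f \<longlonglongrightarrow> L"
proof -
  have g: "(\<lambda>k. D * (a k + b k)) \<longlonglongrightarrow> 0"
    using tendsto_mult_right_zero[OF tendsto_add_zero[OF a b], of D] by simp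
  have l: "(\<lambda>k. L - D * (a k + b k)) \<longlonglongrightarrow> L" using tendsto_diff[OF tendsto_const g] by simp
  have h: "(\<lambda>k. L + D * (a k + b k)) \<longlonglongrightarrow> L" using tendsto_add[OF tendsto_const g] by simp
  show ?thesis
    by (rule tendsto_sandwich[OF _ _ l h]) (use bnd in \<open>auto simp: abs_le_iff algebra_simps\<close>)
qed

context G begin

lemma wd_prob: "w \<in> V \<Longrightarrow> 0 \<le> \<gamma> \<Longrightarrow> \<gamma> \<le> 1 \<Longrightarrow> prob (walk_dist V E \<gamma> w k)"
  unfolding prob_def using wd_nonneg wd_mass by auto

lemma pi_prob: "prob pi" unfolding prob_def using pi_nonneg pi_mass by auto

lemma pi_on_prob: "bip X \<Longrightarrow> prob (pi_on X)" unfolding prob_def using pi_on_nonneg pi_on_mass by auto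

lemma alt_prob: "bip (side u) \<Longrightarrow> prob (alt u k)"
  unfolding alt_def using pi_on_prob bip_compl by auto

lemma conv_W:
  assumes pM: "\<And>k. prob (M k)" and pN: "\<And>k. prob (N k)" and pa: "\<And>k. prob (a k)" and pb: "\<And>k. prob (b k)"
    and cM: "(\<lambda>k. \<Sum>x\<in>V. \<bar>M k x - a k x\<bar>) \<longlonglongrightarrow> 0"
    and cN: "(\<lambda>k. \<Sum>x\<in>V. \<bar>N k x - b k x\<bar>) \<longlonglongrightarrow> 0"
    and L: "\<And>k. W (a k) (b k) = L"
  shows "(\<lambda>k. W (M k) (N k)) \<longlonglongrightarrow> L"
proof (rule squeeze[OF _ cM cN])
  fix k show "\<bar>W (M k) (N k) - L\<bar> \<le> D * ((\<Sum>x\<in>V. \<bar>M k x - a k x\<bar>) + (\<Sum>x\<in>V. \<bar>N k x - b k x\<bar>))"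
    using W_lip[OF pM[of k] pN[of k] pa[of k] pb[of k]] L[of k] by simp
qed

lemma W_cong: "(\<And>x. x \<in> V \<Longrightarrow> \<mu> x = \<mu>' x) \<Longrightarrow> (\<And>x. x \<in> V \<Longrightarrow> \<nu> x = \<nu>' x) \<Longrightarrow> W \<mu> \<nu> = W \<mu>' \<nu>'"
  unfolding W_def' transport_plan_def by simp

lemma sum_compl: assumes "\<And>y. y \<in> A \<Longrightarrow> g y = 0" shows "(\<Sum>y\<in>V - A. g y) = (\<Sum>y\<in>V. g y)"
  by (rule sum.mono_neutral_left) (use finV assms in auto)

lemma W_opp: assumes X: "bip X" shows "W (pi_on X) (pi_on (V - X)) = 1"
proof -
  have "W (pi_on X) (pi_on (V - X)) = W (pi_on X) (step 0 (pi_on X))"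
    by (rule W_cong) (simp_all add: pi_on_step[OF X])
  also have "\<dots> \<le> 1 - 0" by (rule W_stepplan[OF pi_on_prob[OF X]]) auto
  finally have up: "W (pi_on X) (pi_on (V - X)) \<le> 1" by simp
  have "(\<Sum>y\<in>V - X. pi_on (V - X) y) = (\<Sum>y\<in>V. pi_on (V - X) y)"
    by (rule sum_compl) (simp add: pi_on_def)
  also have "\<dots> = 1" by (rule pi_on_mass[OF bip_compl[OF X]])
  finally have "1 \<le> W (pi_on X) (pi_on (V - X))"
    using W_lower[OF pi_on_prob[OF X] pi_on_prob[OF bip_compl[OF X]], of X] by (simp add: pi_on_def)
  then show ?thesis using up by simp
qed

lemma step_half: "y \<in> V \<Longrightarrow> step (1/2) \<mu> y = \<mu> y / 2 + step 0 \<mu> y / 2"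
proof -
  assume y: "y \<in> V"
  have "step (1/2) \<mu> y = (\<Sum>x\<in>V. (if x = y then \<mu> x / 2 else 0) + \<mu> x * P 0 x y / 2)"
    unfolding step_def by (rule sum.cong) (auto simp: trans_prob_def field_simps)
  also have "\<dots> = (\<Sum>x\<in>V. (if x = y then \<mu> x / 2 else 0)) + (\<Sum>x\<in>V. \<mu> x * P 0 x y / 2)"
    by (rule sum.distrib)
  also have "\<dots> = \<mu> y / 2 + step 0 \<mu> y / 2" using y finV by (simp add: step_def sum_divide_distrib)
  finally show ?thesis .
qed

lemma W_half: assumes X: "bip X" shows "W (pi_on X) pi = 1 / 2"
proof -
  have "W (pi_on X) pi = W (pi_on X) (step (1/2) (pi_on X))"
  proof (rule W_cong)
    fix y assume y: "y \<in> V"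
    show "pi y = step (1/2) (pi_on X) y"
      unfolding step_half[OF y] pi_on_step[OF X y] using pi_on_sum[OF y, of X] by simp
  qed simp
  also have "\<dots> \<le> 1 - 1/2" by (rule W_stepplan[OF pi_on_prob[OF X]]) auto
  finally have up: "W (pi_on X) pi \<le> 1/2" by simp
  have "(\<Sum>y\<in>V - X. pi y) = (\<Sum>y\<in>V - X. pi_on (V - X) y / 2)"
    by (rule sum.cong) (auto simp: pi_on_def pi_def)
  also have "\<dots> = (\<Sum>y\<in>V. pi_on (V - X) y / 2)"
    by (rule sum_compl) (simp add: pi_on_def)
  also have "\<dots> = 1/2" using pi_on_mass[OF bip_compl[OF X]] by (simp add: sum_divide_distrib[symmetric])
  finally have "1/2 \<le> W (pi_on X) pi"
    using W_lower[OF pi_on_prob[OF X] pi_prob, of X] by (simp add: pi_on_def)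
  then show ?thesis using up by simp
qed

lemma wd_one: "w \<in> V \<Longrightarrow> walk_dist V E 1 w k = walk_dist V E 1 w 0"
proof (induction k)
  case 0 then show ?case by simp
next
  case (Suc k)
  have "walk_dist V E 1 w (Suc k) = step 1 (walk_dist V E 1 w 0)" using Suc by (simp only: wd_Suc)
  also have "\<dots> = walk_dist V E 1 w 0"
  proof
    fix y
    have "step 1 (walk_dist V E 1 w 0) y = (\<Sum>x\<in>V. (if x = w then P 1 x y else 0))"
      unfolding step_def by (rule sum.cong) auto
    also have "\<dots> = P 1 w y" using Suc.prems finV by simp
    also have "\<dots> = walk_dist V E 1 w 0 y" by (auto simp: trans_prob_def)
    finally show "step 1 (walk_dist V E 1 w 0) y = walk_dist V E 1 w 0 y" .
  qed
  finally show ?case .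
qed

end


theorem theorem3p9:
  fixes V :: "'a set" and E :: "'a \<Rightarrow> 'a \<Rightarrow> bool"
    and u v :: 'a and \<alpha> \<beta> :: real
  assumes graph: "simple_graph V E" and conn: "connected_graph V E"
    and nontriv: "card V \<ge> 2"
    and uV: "u \<in> V" and vV: "v \<in> V"
    and ab: "0 \<le> \<alpha>" "\<alpha> \<le> \<beta>" "\<beta> \<le> 1"
    and excl: "\<not> (bipartite V E \<and> \<alpha> = 0 \<and> \<beta> = 1)"
  shows "\<exists>W. (\<lambda>k. wasserstein V E (walk_dist V E \<alpha> u k) (walk_dist V E \<beta> v k)) \<longlonglongrightarrow> W
     \<and> (((0 < \<alpha> \<and> \<beta> < 1)
          \<or> (\<alpha> = 1 \<and> \<beta> = 1 \<and> u = v)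
          \<or> (\<not> bipartite V E \<and> \<alpha> = 0 \<and> \<beta> < 1)
          \<or> (\<alpha> = 0 \<and> \<beta> = 0 \<and> (\<exists>n. even n \<and> (E ^^ n) u v))) \<longrightarrow> W = 0)
     \<and> ((\<alpha> = 0 \<and> \<beta> = 0 \<and> W \<noteq> 0) \<longrightarrow> W = 1)
     \<and> ((\<alpha> = 0 \<and> 0 < \<beta> \<and> \<beta> < 1 \<and> bipartite V E) \<longrightarrow> W = 1 / 2)"
proof -
  interpret G V E using graph conn nontriv by unfold_locales
  have pM: "\<And>k. prob (walk_dist V E \<alpha> u k)" using wd_prob uV ab by auto
  have pN: "\<And>k. prob (walk_dist V E \<beta> v k)" using wd_prob vV ab by auto
  have zero: "(\<lambda>k. \<Sum>x\<in>V. \<bar>walk_dist V E \<beta> v k x - walk_dist V E \<beta> v k x\<bar>) \<longlonglongrightarrow> 0" by simp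
  show ?thesis
  proof (cases "\<alpha> = 1")
    case True
    then have b1: "\<beta> = 1" using ab by simp
    define L where "L = W (walk_dist V E 1 u 0) (walk_dist V E 1 v 0)"
    have "(\<lambda>k. W (walk_dist V E \<alpha> u k) (walk_dist V E \<beta> v k)) = (\<lambda>k. L)"
      using True b1 wd_one uV vV unfolding L_def by simp
    then have lim: "(\<lambda>k. W (walk_dist V E \<alpha> u k) (walk_dist V E \<beta> v k)) \<longlonglongrightarrow> L" by simp
    have "u = v \<Longrightarrow> L = 0" unfolding L_def using W_diag[OF wd_prob[OF uV, of 1 0]] by simp
    then show ?thesis using lim True b1 by (intro exI[of _ L]) auto
  next
    case a1: False
    then have a1: "\<alpha> < 1" using ab by simp
    show ?thesis
    proof (cases "0 < \<alpha> \<or> \<not> bipartite V E")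
      case ap: True
      have cM: "(\<lambda>k. \<Sum>x\<in>V. \<bar>walk_dist V E \<alpha> u k x - pi x\<bar>) \<longlonglongrightarrow> 0"
        by (rule conv_pi[OF uV ab(1) a1 ap])
      show ?thesis
      proof (cases "\<beta> = 1")
        case b1: True
        define L where "L = W pi (walk_dist V E 1 v 0)"
        have lim: "(\<lambda>k. W (walk_dist V E \<alpha> u k) (walk_dist V E \<beta> v k)) \<longlonglongrightarrow> L"
          by (rule conv_W[OF pM pN _ _ cM zero]) (use pi_prob pN b1 wd_one vV L_def in auto)
        show ?thesis using lim b1 a1 by (intro exI[of _ L]) auto
      next
        case False
        then have b1: "\<beta> < 1" using ab by simp
        have ap': "0 < \<beta> \<or> \<not> bipartite V E" using ap ab by auto
        have cN: "(\<lambda>k. \<Sum>x\<in>V. \<bar>walk_dist V E \<beta> v k x - pi x\<bar>) \<longlonglongrightarrow> 0"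
          by (rule conv_pi[OF vV _ b1 ap']) (use ab in simp)
        have lim: "(\<lambda>k. W (walk_dist V E \<alpha> u k) (walk_dist V E \<beta> v k)) \<longlonglongrightarrow> 0"
          by (rule conv_W[OF pM pN _ _ cM cN]) (use pi_prob W_diag in auto)
        show ?thesis using lim ap by (intro exI[of _ 0]) auto
      qed
    next
      case False
      then have a0: "\<alpha> = 0" and bp: "bipartite V E" using ab by auto
      have b1: "\<beta> < 1" using excl a0 bp ab by auto
      obtain X where X: "bip X" using bipartite_bip[OF bp] by blast
      have bu: "bip (side u)" by (rule side_bip[OF X uV])
      have bv: "bip (side v)" by (rule side_bip[OF X vV])
      have cM: "(\<lambda>k. \<Sum>x\<in>V. \<bar>walk_dist V E \<alpha> u k x - alt u k x\<bar>) \<longlonglongrightarrow> 0"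
        using conv_bip[OF uV bp] a0 by simp
      have pa: "\<And>k. prob (alt u k)" using alt_prob[OF bu] by simp
      have VV: "V - (V - side u) = side u" using bu unfolding bip_def by blast
      show ?thesis
      proof (cases "0 < \<beta>")
        case bpos: True
        have cN: "(\<lambda>k. \<Sum>x\<in>V. \<bar>walk_dist V E \<beta> v k x - pi x\<bar>) \<longlonglongrightarrow> 0"
          by (rule conv_pi[OF vV _ b1]) (use ab bpos in simp_all)
        have Lk: "W (alt u k) pi = 1/2" for k
          unfolding alt_def using W_half[OF bu] W_half[OF bip_compl[OF bu]] by simp
        have lim: "(\<lambda>k. W (walk_dist V E \<alpha> u k) (walk_dist V E \<beta> v k)) \<longlonglongrightarrow> 1/2"
          by (rule conv_W[OF pM pN pa _ cM cN Lk]) (rule pi_prob)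
        show ?thesis using lim a0 bp bpos b1 by (intro exI[of _ "1/2"]) auto
      next
        case False
        then have b0: "\<beta> = 0" using ab by simp
        have cN: "(\<lambda>k. \<Sum>x\<in>V. \<bar>walk_dist V E \<beta> v k x - alt v k x\<bar>) \<longlonglongrightarrow> 0"
          using conv_bip[OF vV bp] b0 by simp
        have pb: "\<And>k. prob (alt v k)" using alt_prob[OF bv] by simp
        show ?thesis
        proof (cases "v \<in> side u")
          case True
          then have sv: "side v = side u" using side_char[OF X uV] side_char[OF X vV] by auto
          have "alt v = alt u" unfolding alt_def by (simp only: sv)
          then have Lk: "W (alt u k) (alt v k) = 0" for k using W_diag[OF pa[of k]] by simp
          have lim: "(\<lambda>k. W (walk_dist V E \<alpha> u k) (walk_dist V E \<beta> v k)) \<longlonglongrightarrow> 0"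
            by (rule conv_W[OF pM pN pa pb cM cN Lk])
          show ?thesis using lim b0 by (intro exI[of _ 0]) auto
        next
          case False
          then have sv: "side v = V - side u" using side_char[OF X uV] side_char[OF X vV] vV by auto
          have Lk: "W (alt u k) (alt v k) = 1" for k
            unfolding alt_def sv VV using W_opp[OF bu] W_opp[OF bip_compl[OF bu]] VV by simp
          have lim: "(\<lambda>k. W (walk_dist V E \<alpha> u k) (walk_dist V E \<beta> v k)) \<longlonglongrightarrow> 1"
            by (rule conv_W[OF pM pN pa pb cM cN Lk])
          have noev: "\<not> (\<exists>n. even n \<and> (E ^^ n) u v)" using False vV unfolding side_def by blast
          show ?thesis using lim b0 a0 bp noev by (intro exI[of _ 1]) auto
        qed
      qed
    qed
  qed
qed


end
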